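(* For every integer $m\ge 1$ there exist polynomials $U_m(x),V_m(x)$ with rational coefficients, of degrees $2m-1$ and $2m$ respectively, which take integer values at integers, such that for all integers $n\ge2$ $$\sum_{k=1}^n(-1)^k\cot^{2m-1}\frac{(2k-1)\pi}{4n}=U_m(n),\qquad \sum_{k=1}^n\cot^{2m}\frac{(2k-1)\pi}{4n}=V_m(n).$$ *)

theory Defs
  imports "HOL-Analysis.Analysis" "HOL-Computational_Algebra.Polynomial"
begin

definition int_valued_poly :: "rat poly \<Rightarrow> bool" where
  "int_valued_poly p \<longleftrightarrow> (\<forall>z::int. poly p (of_int z) \<in> \<int>)"

end

theory Submission
  imports Defs
begin


lemma geo_poly:
  fixes a :: real
  shows "[:1, -a:] * (\<Sum>i\<le>p. monom (a^(i+1)) i) = [:a:] - monom (a^(p+2)) (p+1)"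
proof (induction p)
  case 0
  then show ?case by (simp add: poly_eq_iff coeff_pCons power2_eq_square split: nat.split)
next
  case (Suc p)
  have step: "[:1, -a:] * monom (a^(p+2)) (p+1) = monom (a^(p+2)) (p+1) - monom (a^(p+3)) (p+2)"
  proof -
    have e: "[:1, -a:] = 1 - monom a 1" by (simp add: poly_eq_iff coeff_pCons split: nat.split)
    show ?thesis unfolding e by (simp add: algebra_simps mult_monom eval_nat_numeral)
  qed
  have "[:1, -a:] * (\<Sum>i\<le>Suc p. monom (a^(i+1)) i) =
     [:1, -a:] * (\<Sum>i\<le>p. monom (a^(i+1)) i) + [:1, -a:] * monom (a^(p+2)) (p+1)"
    by (simp add: algebra_simps)
  also have "\<dots> = [:a:] - monom (a^(p+2)) (p+1) + (monom (a^(p+2)) (p+1) - monom (a^(p+3)) (p+2))"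
    unfolding Suc.IH step ..
  also have "\<dots> = [:a:] - monom (a^(Suc p+2)) (Suc p+1)"
    by (simp add: eval_nat_numeral)
  finally show ?case .
qed

lemma coeff_mult_monom_low: "coeff (q * monom a (Suc p)) p = 0"
  by (subst mult.commute) (simp add: coeff_monom_mult)

lemma coeff_sum_monom:
  "coeff (\<Sum>i\<le>p. monom (f i) i) t = (if t \<le> p then f t else 0)"
  by (simp add: coeff_sum coeff_monom)

lemma newton:
  fixes c :: "'k \<Rightarrow> real"
  assumes K: "finite K"
  shows "(\<Sum>j\<le>p. coeff (\<Prod>k\<in>K. [:1, - c k:]) j * (\<Sum>k\<in>K. c k ^ (p + 1 - j)))
         = - of_nat (p+1) * coeff (\<Prod>k\<in>K. [:1, - c k:]) (p+1)"
proof -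
  define E where "E = (\<Prod>k\<in>K. [:1, - c k:])"
  define Ek where "Ek k = (\<Prod>l\<in>K-{k}. [:1, - c l:])" for k
  define H where "H = (\<Sum>i\<le>p. monom (\<Sum>k\<in>K. c k ^ (i+1)) i)"
  have EEk: "E = [:1, - c k:] * Ek k" if "k \<in> K" for k
    unfolding E_def Ek_def using K that by (simp add: prod.remove)
  have H: "H = (\<Sum>k\<in>K. \<Sum>i\<le>p. monom (c k ^ (i+1)) i)"
    unfolding H_def by (simp add: monom_sum sum.swap[of _ K])
  have "E * H = (\<Sum>k\<in>K. E * (\<Sum>i\<le>p. monom (c k ^ (i+1)) i))"
    by (simp add: H sum_distrib_left)
  also have "\<dots> = (\<Sum>k\<in>K. Ek k * ([:c k:] - monom (c k^(p+2)) (p+1)))"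
  proof (rule sum.cong[OF refl])
    fix k assume k: "k \<in> K"
    show "E * (\<Sum>i\<le>p. monom (c k ^ (i+1)) i) = Ek k * ([:c k:] - monom (c k^(p+2)) (p+1))"
    proof -
      have "E * (\<Sum>i\<le>p. monom (c k ^ (i+1)) i) = Ek k * ([:1, - c k:] * (\<Sum>i\<le>p. monom (c k ^ (i+1)) i))"
        unfolding EEk[OF k] mult.assoc by (rule mult.left_commute)
      then show ?thesis by (simp only: geo_poly)
    qed
  qed
  also have "\<dots> = - pderiv E - (\<Sum>k\<in>K. monom (c k^(p+2)) (p+1) * Ek k)"
    by (simp add: E_def Ek_def pderiv_prod algebra_simps sum_subtractf pderiv_pCons sum_negf)
  finally have EH: "E * H = - pderiv E - (\<Sum>k\<in>K. monom (c k^(p+2)) (p+1) * Ek k)" .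
  have "coeff (E * H) p = (\<Sum>j\<le>p. coeff E j * (\<Sum>k\<in>K. c k ^ (p + 1 - j)))"
    unfolding coeff_mult H_def coeff_sum_monom
    by (intro sum.cong refl) (auto simp: Suc_diff_le)
  moreover have "coeff (E * H) p = - of_nat (p+1) * coeff E (p+1)"
    unfolding EH by (simp add: coeff_sum coeff_monom_mult coeff_pderiv algebra_simps coeff_mult_monom_low)
  ultimately show ?thesis unfolding E_def by simp
qed



lemma factor_roots:
  fixes G :: "real poly" and x :: "'k \<Rightarrow> real"
  assumes K: "finite K" and dG: "degree G = card K" and G0: "coeff G 0 = 1"
    and inj: "inj_on x K" and nz: "\<And>k. k \<in> K \<Longrightarrow> x k \<noteq> 0"
    and root: "\<And>k. k \<in> K \<Longrightarrow> poly G (x k) = 0"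
  shows "G = (\<Prod>k\<in>K. [:1, - (1 / x k):])"
proof -
  define E where "E = (\<Prod>k\<in>K. [:1, - (1 / x k):])"
  have rootE: "poly E (x k) = 0" if "k \<in> K" for k
    unfolding E_def poly_prod using K that nz[OF that]
    by (intro prod_zero) (auto intro!: bexI[of _ k])
  have dE: "degree E = card K"
    unfolding E_def using nz
    by (subst degree_prod_eq_sum_degree) auto
  have E0: "coeff E 0 = 1" unfolding E_def poly_0_coeff_0[symmetric] poly_prod by simp
  have Enz: "E \<noteq> 0" using E0 by auto
  have Gnz: "G \<noteq> 0" using G0 by auto
  define D where "D = smult (lead_coeff E) G - smult (lead_coeff G) E"
  have cD: "coeff D (card K) = 0" unfolding D_def using dE dG by simp
  have dD: "degree D \<le> card K" unfolding D_def
    by (rule order.trans[OF degree_diff_le_max]) (auto simp: dE dG)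
  have "D = 0"
  proof (rule ccontr)
    assume Dnz: "D \<noteq> 0"
    have "degree D \<noteq> card K" using cD Dnz by (metis leading_coeff_0_iff)
    with dD have lt: "degree D < card K" by simp
    have sub: "x ` K \<subseteq> {z. poly D z = 0}"
      using root rootE by (auto simp: D_def)
    have "card K = card (x ` K)" using inj by (simp add: card_image)
    also have "\<dots> \<le> card {z. poly D z = 0}"
      by (rule card_mono[OF poly_roots_finite[OF Dnz] sub])
    also have "\<dots> \<le> degree D" by (rule card_poly_roots_bound[OF Dnz])
    finally show False using lt by simp
  qed
  then have "coeff D 0 = 0" by simp
  then have l: "lead_coeff E = lead_coeff G" unfolding D_def using E0 G0 by simp
  have "lead_coeff G \<noteq> 0" using Gnz by simp
  with \<open>D = 0\<close> l have "G = E" unfolding D_def by (metis eq_iff_diff_eq_0 smult_cancel)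
  then show ?thesis unfolding E_def .
qed



definition th :: "nat \<Rightarrow> nat \<Rightarrow> real" where
  "th n k = (2*real k - 1) * pi / (4*real n)"
definition ps :: "nat \<Rightarrow> nat \<Rightarrow> real" where
  "ps n k = (-1)^k * th n k"
definition sgn4 :: "nat \<Rightarrow> int" where
  "sgn4 j = (if j mod 4 < 2 then 1 else -1)"
definition Gp :: "nat \<Rightarrow> real poly" where
  "Gp n = (\<Sum>j\<le>n. monom (of_int (sgn4 j) * of_nat (n choose j)) j)"

lemma th_bounds:
  assumes "1 \<le> k" "k \<le> n"
  shows "0 < th n k" "th n k < pi/2"
proof -
  have n: "real n > 0" using assms by simp
  have "2*real k - 1 > 0" using assms by simp
  then show "0 < th n k" unfolding th_def using n by simp
  have "2*real k - 1 < 2 * real n" using assms by simp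
  then have "(2*real k - 1) * pi < (2 * real n) * pi" by simp
  then show "th n k < pi/2" unfolding th_def using n by (simp add: field_simps)
qed

lemma ps_bounds:
  assumes "1 \<le> k" "k \<le> n"
  shows "-(pi/2) < ps n k" "ps n k < pi/2" "ps n k \<noteq> 0" "\<bar>ps n k\<bar> = th n k"
  using th_bounds[OF assms] unfolding ps_def
  by (cases "even k"; simp)+

lemma sgn4_Re_Im: "Re (\<i>^j) + Im (\<i>^j) = of_int (sgn4 j)"
proof -
  have "\<i>^j = \<i>^(j mod 4 + 4 * (j div 4))" by simp
  also have "\<dots> = \<i>^(j mod 4)"
  proof -
    have i4: "\<i>^4 = 1" by (simp add: eval_nat_numeral)
    show ?thesis by (simp only: power_add power_mult i4) simp
  qed
  finally have e: "\<i>^j = \<i>^(j mod 4)" .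
  have i2: "\<i>^(2::nat) = -1" by simp
  have i3: "\<i>^(3::nat) = -\<i>" by (simp add: eval_nat_numeral)
  then consider "j mod 4 = 0" | "j mod 4 = 1" | "j mod 4 = 2" | "j mod 4 = 3" by arith
  then show ?thesis
  proof cases
    case 1 then show ?thesis by (simp add: e sgn4_def)
  next
    case 2 then show ?thesis by (simp add: e sgn4_def)
  next
    case 3 then show ?thesis by (simp only: e i2 sgn4_def) simp
  next
    case 4 then show ?thesis by (simp only: e i3 sgn4_def) simp
  qed
qed

lemma binom_Re_Im:
  fixes t :: real
  shows "Re ((1 + \<i> * of_real t)^n) + Im ((1 + \<i> * of_real t)^n)
       = (\<Sum>j\<le>n. of_int (sgn4 j) * of_nat (n choose j) * t^j)"
proof -
  have e: "(1 + \<i> * of_real t)^n = (\<Sum>j\<le>n. of_real (of_nat (n choose j) * t^j) * \<i>^j)"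
    by (subst add.commute, subst binomial_ring) (simp add: power_mult_distrib mult_ac)
  show ?thesis unfolding e Re_sum Im_sum sum.distrib[symmetric]
  proof (rule sum.cong[OF refl])
    fix j
    have "Re (complex_of_real (real (n choose j) * t ^ j) * \<i> ^ j) + Im (complex_of_real (real (n choose j) * t ^ j) * \<i> ^ j)
      = (real (n choose j) * t ^ j) * (Re (\<i>^j) + Im (\<i>^j))"
      by (simp add: algebra_simps)
    then show "Re (complex_of_real (real (n choose j) * t ^ j) * \<i> ^ j) + Im (complex_of_real (real (n choose j) * t ^ j) * \<i> ^ j)
      = of_int (sgn4 j) * of_nat (n choose j) * t^j"
      by (simp add: sgn4_Re_Im)
  qed
qed

lemma poly_Gp: "poly (Gp n) t = (\<Sum>j\<le>n. of_int (sgn4 j) * of_nat (n choose j) * t^j)"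
  unfolding Gp_def by (simp add: poly_sum poly_monom)

lemma coeff_Gp: "coeff (Gp n) j = of_int (sgn4 j) * of_nat (n choose j)"
  unfolding Gp_def by (simp add: coeff_sum coeff_monom)

lemma degree_Gp: "degree (Gp n) = n"
proof (rule antisym)
  show "degree (Gp n) \<le> n" by (rule degree_le) (auto simp: coeff_Gp)
  show "n \<le> degree (Gp n)" by (rule le_degree) (simp add: coeff_Gp sgn4_def)
qed

lemma coeff_Gp0: "coeff (Gp n) 0 = 1"
  by (simp add: coeff_Gp sgn4_def)

lemma one_plus_i_tan:
  assumes "cos x \<noteq> 0"
  shows "1 + \<i> * of_real (tan x) = cis x / of_real (cos x)"
  using assms by (simp add: complex_eq_iff tan_def)

lemma Gp_root:
  assumes "1 \<le> k" "k \<le> n"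
  shows "poly (Gp n) (tan (ps n k)) = 0"
proof -
  define x where "x = ps n k"
  have c: "cos x > 0" unfolding x_def using ps_bounds[OF assms] by (intro cos_gt_zero_pi) auto
  have "poly (Gp n) (tan x) = Re ((cis x / of_real (cos x))^n) + Im ((cis x / of_real (cos x))^n)"
    unfolding poly_Gp binom_Re_Im[symmetric] one_plus_i_tan[OF c[THEN less_imp_neq, symmetric]] ..
  also have "\<dots> = (cos (n*x) + sin (n*x)) / cos x ^ n"
    by (simp add: power_divide Complex.DeMoivre add_divide_distrib)
  also have "cos (n*x) + sin (n*x) = 0"
  proof -
    define m :: int where "m = (if even k then int (k div 2) else - int ((k-1) div 2))"
    have nx: "n * x + pi/4 = pi * of_int m"
    proof (cases "even k")
      case True
      then obtain q where q: "k = 2*q" by auto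
      show ?thesis using True assms unfolding x_def ps_def th_def m_def q
        by (simp add: field_simps)
    next
      case False
      then obtain q where q: "k = 2*q+1" using oddE by blast
      show ?thesis using False assms unfolding x_def ps_def th_def m_def q
        by (simp add: field_simps)
    qed
    have "sin (n * x + pi/4) = 0" unfolding nx by simp
    then have "sqrt 2 / 2 * (cos (n*x) + sin (n*x)) = 0" by (simp add: sin_add sin_45 cos_45 algebra_simps)
    then show ?thesis by simp
  qed
  finally show ?thesis unfolding x_def by simp
qed



lemma tan_inj:
  assumes "-(pi/2) < a" "a < pi/2" "-(pi/2) < b" "b < pi/2" "tan a = tan b"
  shows "a = b"
proof (rule ccontr)
  assume "a \<noteq> b"
  then have "a < b \<or> b < a" by auto
  then show False using tan_monotone'[of a b] tan_monotone'[of b a] assms by auto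
qed

definition cc :: "nat \<Rightarrow> nat \<Rightarrow> real" where
  "cc n k = (-1)^k * cot (th n k)"

definition S :: "nat \<Rightarrow> nat \<Rightarrow> real" where
  "S n p = (\<Sum>k\<in>{1..n}. cc n k ^ p)"

lemma inv_tan_ps: "1 / tan (ps n k) = cc n k"
  unfolding cc_def ps_def cot_altdef
  by (cases "even k") (auto simp: divide_inverse)

lemma Gp_prod:
  shows "Gp n = (\<Prod>k\<in>{1..n}. [:1, - cc n k:])"
proof -
  have "Gp n = (\<Prod>k\<in>{1..n}. [:1, - (1 / tan (ps n k)):])"
  proof (rule factor_roots)
    show "finite {1..n}" by simp
    show "degree (Gp n) = card {1..n}" by (simp add: degree_Gp)
    show "coeff (Gp n) 0 = 1" by (rule coeff_Gp0)
    show "inj_on (\<lambda>k. tan (ps n k)) {1..n}"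
    proof (rule inj_onI)
      fix a b assume a: "a \<in> {1..n}" and b: "b \<in> {1..n}" and e: "tan (ps n a) = tan (ps n b)"
      have a1: "1 \<le> a" "a \<le> n" and b1: "1 \<le> b" "b \<le> n" using a b by auto
      have "ps n a = ps n b"
        by (rule tan_inj[OF ps_bounds(1,2)[OF a1] ps_bounds(1,2)[OF b1] e])
      then have "\<bar>ps n a\<bar> = \<bar>ps n b\<bar>" by simp
      then have th: "th n a = th n b" unfolding ps_bounds(4)[OF a1] ps_bounds(4)[OF b1] .
      have n0: "real n \<noteq> 0" using a1 by simp
      from th have "(2*real a - 1) * pi / (4*real n) = (2*real b - 1) * pi / (4*real n)"
        unfolding th_def .
      then have "(2*real a - 1) * pi = (2*real b - 1) * pi" using n0 by (simp only: divide_cancel_right) simp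
      then show "a = b" by simp
    qed
    fix k assume k: "k \<in> {1..n}"
    have k1: "1 \<le> k" "k \<le> n" using k by auto
    show "tan (ps n k) \<noteq> 0"
    proof
      assume t0: "tan (ps n k) = 0"
      have "ps n k = 0"
        by (rule tan_inj[OF ps_bounds(1,2)[OF k1] _ _ ]) (use t0 in auto)
      then show False using ps_bounds(3)[OF k1] by simp
    qed
    show "poly (Gp n) (tan (ps n k)) = 0" using Gp_root[OF k1] .
  qed
  then show ?thesis by (simp add: inv_tan_ps)
qed

lemma newton_S:
  "(\<Sum>j\<le>p. coeff (Gp n) j * S n (p + 1 - j)) = - of_nat (p+1) * coeff (Gp n) (p+1)"
  unfolding S_def Gp_prod by (rule newton) simp

lemma recur_S:
  "S n (Suc q) = - of_nat (q+1) * coeff (Gp n) (q+1) - (\<Sum>j\<in>{1..q}. coeff (Gp n) j * S n (q + 1 - j))"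
proof -
  have "{..q} = insert 0 {1..q}" by auto
  then have "(\<Sum>j\<le>q. coeff (Gp n) j * S n (q + 1 - j)) = S n (Suc q) + (\<Sum>j\<in>{1..q}. coeff (Gp n) j * S n (q + 1 - j))"
    by (simp add: coeff_Gp0)
  with newton_S[of n q] show ?thesis by (simp add: algebra_simps)
qed

definition bpoly :: "nat \<Rightarrow> rat poly" where
  "bpoly j = smult (1 / fact j) (\<Prod>i\<in>{0..<j}. [:- of_nat i, 1:])"

lemma poly_bpoly: "poly (bpoly j) x = x gchoose j"
  unfolding bpoly_def gbinomial_prod_rev by (simp add: poly_prod)

definition Gam :: "nat \<Rightarrow> rat poly" where
  "Gam j = smult (of_int (sgn4 j)) (bpoly j)"

lemma Gam_val: "of_rat (poly (Gam j) (of_nat n)) = coeff (Gp n) j"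
  unfolding Gam_def coeff_Gp by (simp add: poly_bpoly binomial_gbinomial[symmetric] of_rat_mult)

lemma iv_bpoly: "int_valued_poly (bpoly j)"
  unfolding int_valued_poly_def poly_bpoly
proof
  fix z :: int
  show "(of_int z :: rat) gchoose j \<in> \<int>"
  proof (cases "z \<ge> 0")
    case True
    then have "(of_int z :: rat) = of_nat (nat z)" by (simp only: of_nat_nat)
    show ?thesis unfolding \<open>(of_int z :: rat) = of_nat (nat z)\<close> binomial_gbinomial[symmetric] by (rule Ints_of_nat)
  next
    case False
    have e1: "(of_nat j - of_int z - 1 :: rat) = of_int (int j - z - 1)" by simp
    have e2: "(of_nat (nat (int j - z - 1)) :: rat) = of_int (int j - z - 1)"
      by (rule of_nat_nat) (use False in linarith)
    have e: "(of_nat j - of_int z - 1 :: rat) = of_nat (nat (int j - z - 1))" unfolding e1 e2 ..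
    show ?thesis
      by (subst gbinomial_negated_upper) (simp only: e binomial_gbinomial[symmetric] Ints_mult Ints_power Ints_of_nat Ints_minus Ints_1)
  qed
qed

lemma iv_add: "int_valued_poly p \<Longrightarrow> int_valued_poly q \<Longrightarrow> int_valued_poly (p + q)"
  unfolding int_valued_poly_def by simp
lemma iv_diff: "int_valued_poly p \<Longrightarrow> int_valued_poly q \<Longrightarrow> int_valued_poly (p - q)"
  unfolding int_valued_poly_def by simp
lemma iv_minus: "int_valued_poly p \<Longrightarrow> int_valued_poly (- p)"
  unfolding int_valued_poly_def by simp
lemma iv_mult: "int_valued_poly p \<Longrightarrow> int_valued_poly q \<Longrightarrow> int_valued_poly (p * q)"
  unfolding int_valued_poly_def by simp
lemma iv_smult: "int_valued_poly p \<Longrightarrow> int_valued_poly (smult (of_int c) p)"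
  unfolding int_valued_poly_def by simp
lemma iv_smult_nat: "int_valued_poly p \<Longrightarrow> int_valued_poly (smult (of_nat c) p)"
  using iv_smult[of p "int c"] by simp
lemma iv_sum: "(\<And>j. j \<in> A \<Longrightarrow> int_valued_poly (f j)) \<Longrightarrow> int_valued_poly (\<Sum>j\<in>A. f j)"
  unfolding int_valued_poly_def by (simp add: poly_sum Ints_sum)

lemma iv_Gam: "int_valued_poly (Gam j)"
  unfolding Gam_def by (intro iv_smult iv_bpoly)

lemma main_exists:
  "1 \<le> p \<Longrightarrow> \<exists>T. int_valued_poly T \<and> (\<forall>n\<ge>1. of_rat (poly T (of_nat n)) = S n p)"
proof (induction p rule: less_induct)
  case (less p)
  obtain q where p: "p = Suc q" using less.prems by (cases p) auto
  have "\<forall>r\<in>{1..q}. \<exists>T. int_valued_poly T \<and> (\<forall>n\<ge>1. of_rat (poly T (of_nat n)) = S n r)"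
    using less.IH p by auto
  from bchoice[OF this] obtain f where f: "\<forall>r\<in>{1..q}. int_valued_poly (f r) \<and> (\<forall>n\<ge>1. of_rat (poly (f r) (of_nat n)) = S n r)"
    by blast
  define T where "T = - smult (of_nat (q+1)) (Gam (q+1)) - (\<Sum>j\<in>{1..q}. Gam j * f (q+1-j))"
  have "int_valued_poly T"
    unfolding T_def
  proof (intro iv_diff iv_minus iv_smult_nat iv_Gam iv_sum iv_mult)
    fix j assume "j \<in> {1..q}"
    then have "q + 1 - j \<in> {1..q}" by auto
    then show "int_valued_poly (f (q + 1 - j))" using f by blast
  qed
  moreover have "of_rat (poly T (of_nat n)) = S n p" if n: "n \<ge> 1" for n
  proof -
    have "of_rat (poly T (of_nat n)) = - of_nat (q+1) * coeff (Gp n) (q+1)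
       - (\<Sum>j\<in>{1..q}. coeff (Gp n) j * of_rat (poly (f (q+1-j)) (of_nat n)))"
      unfolding T_def by (simp add: poly_sum of_rat_sum of_rat_mult of_rat_diff of_rat_minus of_rat_add Gam_val) (simp add: algebra_simps)
    also have "(\<Sum>j\<in>{1..q}. coeff (Gp n) j * of_rat (poly (f (q+1-j)) (of_nat n)))
        = (\<Sum>j\<in>{1..q}. coeff (Gp n) j * S n (q+1-j))"
    proof (intro sum.cong refl)
      fix j assume "j \<in> {1..q}"
      then have "q + 1 - j \<in> {1..q}" by auto
      then show "coeff (Gp n) j * of_rat (poly (f (q+1-j)) (of_nat n)) = coeff (Gp n) j * S n (q+1-j)"
        using f n by simp
    qed
    finally have "of_rat (poly T (of_nat n)) = - of_nat (q+1) * coeff (Gp n) (q+1) - (\<Sum>j\<in>{1..q}. coeff (Gp n) j * S n (q+1-j))" .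
    then show ?thesis unfolding p recur_S[of n q] .
  qed
  ultimately show ?case by (intro exI[of _ T] conjI allI impI) auto
qed



lemma tan_ge_x:
  fixes x :: real
  assumes "0 \<le> x" "x < pi/2"
  shows "x \<le> tan x"
proof (cases "x = 0")
  case True then show ?thesis by simp
next
  case False
  then have x0: "0 < x" using assms by simp
  have "DERIV tan y :> inverse ((cos y)\<^sup>2)" if "0 \<le> y" "y \<le> x" for y
  proof -
    have "cos y \<noteq> 0" using that assms cos_gt_zero_pi[of y] by force
    then show ?thesis by (rule DERIV_tan)
  qed
  from MVT2[OF x0 this] obtain z where z: "0 < z" "z < x"
    and d: "tan x - tan 0 = (x - 0) * inverse ((cos z)\<^sup>2)" by auto
  have cz: "0 < cos z" using z assms cos_gt_zero_pi[of z] by force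
  have "(cos z)\<^sup>2 \<le> 1" using cos_le_one[of z] cz by (intro power_le_one) auto
  then have "1 \<le> inverse ((cos z)\<^sup>2)" using cz by (simp add: one_le_inverse)
  then have "x * 1 \<le> x * inverse ((cos z)\<^sup>2)" using x0 by (intro mult_left_mono) auto
  then show ?thesis using d by simp
qed

lemma cot_pos: "0 < x \<Longrightarrow> x < pi/2 \<Longrightarrow> 0 < cot (x::real)"
  unfolding cot_altdef by (rule positive_imp_inverse_positive, rule tan_gt_zero)

lemma cot_le_inv: "0 < x \<Longrightarrow> x < pi/2 \<Longrightarrow> cot (x::real) \<le> 1 / x"
proof -
  assume x: "0 < x" "x < pi/2"
  have "x \<le> tan x" using x by (intro tan_ge_x) auto
  then have "1 / tan x \<le> 1 / x" using x by (intro divide_left_mono) auto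
  then show ?thesis by (simp add: cot_altdef inverse_eq_divide)
qed

lemma cot_ge: 
  assumes "0 < x" "x \<le> pi/4"
  shows "(sqrt 2 / 2) / x \<le> cot (x::real)"
proof -
  have s: "0 < sin x" using assms by (intro sin_gt_zero) auto
  have sx: "sin x \<le> x" using assms sin_x_le_x by simp
  have c: "sqrt 2 / 2 \<le> cos x"
    unfolding cos_45[symmetric] using assms by (subst cos_mono_le_eq) auto
  have "(sqrt 2 / 2) / x \<le> cos x / x" using c assms by (intro divide_right_mono) auto
  also have "\<dots> \<le> cos x / sin x"
  proof (rule divide_left_mono[OF sx])
    show "0 \<le> cos x" using assms by (intro cos_ge_zero) auto
    show "0 < x * sin x" using s assms by simp
  qed
  finally show ?thesis by (simp add: cot_def)
qed

lemma cot_anti: "0 < x \<Longrightarrow> x \<le> y \<Longrightarrow> y < pi/2 \<Longrightarrow> cot y \<le> cot (x::real)"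
  unfolding cot_altdef
  by (intro le_imp_inverse_le tan_mono_le tan_gt_zero) auto

lemma alt_bound:
  fixes b :: "nat \<Rightarrow> real"
  assumes "\<forall>j<L. 0 \<le> b j" "\<forall>j. Suc j < L \<longrightarrow> b (Suc j) \<le> b j"
  shows "0 \<le> (\<Sum>j<L. (-1)^j * b j) \<and> (\<Sum>j<L. (-1)^j * b j) \<le> (if L = 0 then 0 else b 0)"
  using assms
proof (induction L arbitrary: b)
  case 0 then show ?case by simp
next
  case (Suc L)
  have IH: "0 \<le> (\<Sum>j<L. (-1)^j * b (Suc j)) \<and> (\<Sum>j<L. (-1)^j * b (Suc j)) \<le> (if L = 0 then 0 else b 1)"
    using Suc.IH[of "\<lambda>j. b (Suc j)"] Suc.prems by auto
  have e: "(\<Sum>j<Suc L. (-1)^j * b j) = b 0 - (\<Sum>j<L. (-1)^j * b (Suc j))"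
    by (subst sum.lessThan_Suc_shift) (simp add: sum_negf)
  have "b 1 \<le> b 0" if "L \<noteq> 0" using Suc.prems that by auto
  moreover have "0 \<le> b 0" using Suc.prems by auto
  ultimately show ?case unfolding e using IH by (auto split: if_splits)
qed

lemma alt_bound2:
  fixes b :: "nat \<Rightarrow> real"
  assumes "2 \<le> L" "\<forall>j<L. 0 \<le> b j" "\<forall>j. Suc j < L \<longrightarrow> b (Suc j) \<le> b j"
  shows "b 0 - b 1 \<le> (\<Sum>j<L. (-1)^j * b j) \<and> (\<Sum>j<L. (-1)^j * b j) \<le> b 0"
proof -
  obtain L' where L: "L = Suc L'" and L': "L' \<noteq> 0" using assms(1) by (cases L) auto
  have IH: "0 \<le> (\<Sum>j<L'. (-1)^j * b (Suc j)) \<and> (\<Sum>j<L'. (-1)^j * b (Suc j)) \<le> b 1"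
    using alt_bound[of L' "\<lambda>j. b (Suc j)"] assms L L' by auto
  have e: "(\<Sum>j<L. (-1)^j * b j) = b 0 - (\<Sum>j<L'. (-1)^j * b (Suc j))"
    unfolding L by (subst sum.lessThan_Suc_shift) (simp add: sum_negf)
  show ?thesis unfolding e using IH by auto
qed

lemma sum_inv_sq: "(\<Sum>k\<in>{1..n}. 1 / real k ^ 2) \<le> 2 - 1 / real n" if "n \<ge> 1" for n
  using that
proof (induction n rule: dec_induct)
  case base then show ?case by simp
next
  case (step n)
  have "(\<Sum>k\<in>{1..Suc n}. 1 / real k ^ 2) = (\<Sum>k\<in>{1..n}. 1 / real k ^ 2) + 1 / real (Suc n) ^ 2"
    by simp
  also have "\<dots> \<le> 2 - 1 / real n + 1 / real (Suc n) ^ 2" using step by simp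
  also have "\<dots> \<le> 2 - 1 / real (Suc n)"
  proof -
    have n: "real n \<ge> 1" using step by simp
    have e: "1 / real n - 1 / real (Suc n) = 1 / (real n * real (Suc n))"
      using n by (simp add: field_simps)
    have "1 / real (Suc n) ^ 2 \<le> 1 / (real n * real (Suc n))"
      using n by (intro divide_left_mono) (auto simp: power2_eq_square)
    then have "1 / real (Suc n) ^ 2 \<le> 1 / real n - 1 / real (Suc n)" unfolding e .
    then show ?thesis by simp
  qed
  finally show ?case .
qed

lemma sum_shift1: "(\<Sum>k\<in>{1..n}. f k) = (\<Sum>j<n. f (Suc j))"
  by (induction n) auto



lemma lin_contra:
  fixes c K :: real
  assumes "c > 0" "\<forall>n::nat\<ge>2. c * real n \<le> K"
  shows False
proof -
  define n where "n = nat \<lceil>K / c\<rceil> + 2"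
  have "K / c \<le> real (nat \<lceil>K / c\<rceil>)" by (rule real_nat_ceiling_ge)
  then have "K / c < real n" unfolding n_def by simp
  then have "c * (K / c) < c * real n" using assms(1) by (intro mult_strict_left_mono) auto
  then have "K < c * real n" using assms(1) by simp
  moreover have "n \<ge> 2" unfolding n_def by simp
  then have "c * real n \<le> K" using assms(2) by blast
  ultimately show False by simp
qed

lemma abs_sum_pow_le:
  fixes a :: "nat \<Rightarrow> real" and x :: real
  assumes "x \<ge> 1" "\<forall>i\<in>A. i \<le> e" "finite A"
  shows "\<bar>\<Sum>i\<in>A. a i * x ^ i\<bar> \<le> (\<Sum>i\<in>A. \<bar>a i\<bar>) * x ^ e"
proof -
  have "\<bar>\<Sum>i\<in>A. a i * x ^ i\<bar> \<le> (\<Sum>i\<in>A. \<bar>a i * x ^ i\<bar>)" by (rule sum_abs)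
  also have "\<dots> \<le> (\<Sum>i\<in>A. \<bar>a i\<bar> * x ^ e)"
  proof (rule sum_mono)
    fix i assume i: "i \<in> A"
    have "x ^ i \<le> x ^ e" using assms i by (intro power_increasing) auto
    then have "\<bar>a i\<bar> * x ^ i \<le> \<bar>a i\<bar> * x ^ e" by (intro mult_left_mono) auto
    then show "\<bar>a i * x ^ i\<bar> \<le> \<bar>a i\<bar> * x ^ e" using assms by (simp add: abs_mult)
  qed
  also have "\<dots> = (\<Sum>i\<in>A. \<bar>a i\<bar>) * x ^ e" by (simp add: sum_distrib_right)
  finally show ?thesis .
qed

lemma degree_from_bounds:
  fixes Q :: "real poly" and c C :: real
  assumes c: "c > 0"
    and lo: "\<forall>n::nat\<ge>2. c * real n ^ d \<le> \<bar>poly Q (real n)\<bar>"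
    and hi: "\<forall>n::nat\<ge>2. \<bar>poly Q (real n)\<bar> \<le> C * real n ^ d"
  shows "degree Q = d"
proof -
  define D where "D = degree Q"
  define M where "M = (\<Sum>i\<le>D. \<bar>coeff Q i\<bar>)"
  have up: "\<bar>poly Q x\<bar> \<le> M * x ^ D" if "x \<ge> 1" for x
    unfolding poly_altdef M_def D_def using that by (intro abs_sum_pow_le) auto
  have "\<not> D < d"
  proof
    assume Dd: "D < d"
    have "c * real n \<le> M" if n: "n \<ge> 2" for n :: nat
    proof -
      have n1: "real n \<ge> 1" using n by simp
      have "real n ^ d = real n ^ D * real n ^ (d - D)" using Dd by (simp flip: power_add)
      moreover have "real n \<le> real n ^ (d - D)" using power_increasing[of 1 "d - D" "real n"] n1 Dd by simp
      ultimately have "real n ^ D * real n \<le> real n ^ d" using n1 by (simp add: mult_left_mono)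
      then have "c * (real n ^ D * real n) \<le> c * real n ^ d" using c by (intro mult_left_mono) auto
      also have "\<dots> \<le> \<bar>poly Q (real n)\<bar>" using lo n by blast
      also have "\<dots> \<le> M * real n ^ D" using up[OF n1] .
      finally have "(c * real n) * real n ^ D \<le> M * real n ^ D" by (simp add: ac_simps)
      then show ?thesis using n1 by (simp add: mult_le_cancel_right)
    qed
    then show False using lin_contra[OF c] by blast
  qed
  moreover have "\<not> d < D"
  proof
    assume dD: "d < D"
    then obtain D' where D': "D = Suc D'" by (cases D) auto
    have dD': "d \<le> D'" using dD D' by simp
    define l where "l = lead_coeff Q"
    have l0: "l \<noteq> 0" unfolding l_def using dD D_def by auto
    define M' where "M' = (\<Sum>i<D. \<bar>coeff Q i\<bar>)"
    have C0: "C \<ge> 0"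
    proof -
      have "c * real 2 ^ d \<le> \<bar>poly Q (real 2)\<bar>" using lo by blast
      also have "\<dots> \<le> C * real 2 ^ d" using hi by blast
      finally have "c * 2 ^ d \<le> C * 2 ^ d" by simp
      moreover have "c * 2 ^ d > 0" using c by simp
      ultimately have "0 < C * 2 ^ d" by linarith
      then show ?thesis by (simp add: zero_less_mult_iff)
    qed
    have "\<bar>l\<bar> * real n \<le> C + M'" if n: "n \<ge> 2" for n :: nat
    proof -
      have n1: "real n \<ge> 1" using n by simp
      have split: "poly Q (real n) = (\<Sum>i<D. coeff Q i * real n ^ i) + l * real n ^ D"
        unfolding poly_altdef l_def D_def by (simp add: lessThan_Suc_atMost[symmetric])
      have s: "\<bar>\<Sum>i<D. coeff Q i * real n ^ i\<bar> \<le> M' * real n ^ D'"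
        unfolding M'_def using n1 D' by (intro abs_sum_pow_le) auto
      have "l * real n ^ D = poly Q (real n) - (\<Sum>i<D. coeff Q i * real n ^ i)" using split by simp
      then have "\<bar>l * real n ^ D\<bar> \<le> \<bar>poly Q (real n)\<bar> + \<bar>\<Sum>i<D. coeff Q i * real n ^ i\<bar>"
        by (metis abs_triangle_ineq4)
      then have "\<bar>l\<bar> * real n ^ D \<le> \<bar>poly Q (real n)\<bar> + \<bar>\<Sum>i<D. coeff Q i * real n ^ i\<bar>"
        by (simp add: abs_mult)
      also have "\<dots> \<le> C * real n ^ d + M' * real n ^ D'"
        by (rule add_mono) (use hi n s in blast)+
      also have "C * real n ^ d \<le> C * real n ^ D'"
        using C0 n1 dD' by (intro mult_left_mono power_increasing) auto
      finally have "\<bar>l\<bar> * real n ^ D \<le> (C + M') * real n ^ D'" by (simp add: algebra_simps)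
      then have "(\<bar>l\<bar> * real n) * real n ^ D' \<le> (C + M') * real n ^ D'"
        unfolding D' by (simp add: ac_simps)
      then show ?thesis using n1 by (simp add: mult_le_cancel_right)
    qed
    then show False using lin_contra[of "\<bar>l\<bar>" "C + M'"] l0 by auto
  qed
  ultimately show ?thesis unfolding D_def by simp
qed



lemma a_pos: "1 \<le> k \<Longrightarrow> k \<le> n \<Longrightarrow> 0 < cot (th n k)"
  using th_bounds by (intro cot_pos) auto

lemma a_upper:
  assumes "1 \<le> k" "k \<le> n"
  shows "cot (th n k) \<le> 4 * real n / ((2 * real k - 1) * pi)"
proof -
  have "cot (th n k) \<le> 1 / th n k" using th_bounds[OF assms] by (intro cot_le_inv) auto
  also have "1 / th n k = 4 * real n / ((2 * real k - 1) * pi)" unfolding th_def by simp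
  finally show ?thesis .
qed

lemma a_mono:
  assumes "1 \<le> k" "Suc k \<le> n"
  shows "cot (th n (Suc k)) \<le> cot (th n k)"
proof (rule cot_anti)
  show "0 < th n k" using th_bounds assms by auto
  show "th n (Suc k) < pi / 2" using th_bounds assms by auto
  have n: "0 < real n" using assms by simp
  have "(2 * real k - 1) * pi \<le> (2 * real (Suc k) - 1) * pi" by simp
  then show "th n k \<le> th n (Suc k)" unfolding th_def using n by (intro divide_right_mono) auto
qed

definition c1 :: real where "c1 = 2 * sqrt 2 / pi"
definition c2 :: real where "c2 = 4 / (3 * pi)"

lemma c12: "0 < c2" "c2 < c1"
proof -
  show "0 < c2" unfolding c2_def by simp
  have "1 \<le> sqrt (2::real)" by simp
  then have s: "2 < 3 * sqrt (2::real)" by linarith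
  then show "c2 < c1" unfolding c1_def c2_def using s by (simp add: field_simps)
qed

lemma a1_lower:
  assumes "1 \<le> n"
  shows "c1 * real n \<le> cot (th n 1)"
proof -
  have t: "th n 1 = pi / (4 * real n)" unfolding th_def by simp
  have n: "real n \<ge> 1" using assms by simp
  have "th n 1 \<le> pi / 4" unfolding t using n by (simp add: field_simps)
  moreover have "0 < th n 1" unfolding t using n by simp
  ultimately have "(sqrt 2 / 2) / th n 1 \<le> cot (th n 1)" by (intro cot_ge) auto
  moreover have "(sqrt 2 / 2) / th n 1 = c1 * real n" unfolding t c1_def by simp
  ultimately show ?thesis by simp
qed

lemma a2_upper:
  assumes "2 \<le> n"
  shows "cot (th n 2) \<le> c2 * real n"
  using a_upper[of 2 n] assms unfolding c2_def by (simp add: field_simps)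

lemma S_odd:
  assumes "odd p"
  shows "S n p = (\<Sum>k=1..n. (-1)^k * cot (th n k) ^ p)"
  unfolding S_def cc_def
proof (rule sum.cong[OF refl])
  fix k
  have "((-1::real)^k)^p = (-1)^k"
    unfolding power_mult[symmetric] using assms by (simp add: minus_one_power_iff)
  then show "((-1)^k * cot (th n k)) ^ p = (-1)^k * cot (th n k) ^ p"
    by (simp add: power_mult_distrib)
qed

lemma S_even:
  assumes "even p"
  shows "S n p = (\<Sum>k=1..n. cot (th n k) ^ p)"
  unfolding S_def cc_def
proof (rule sum.cong[OF refl])
  fix k
  have "((-1::real)^k)^p = 1"
    unfolding power_mult[symmetric] using assms by (simp add: minus_one_power_iff)
  then show "((-1)^k * cot (th n k)) ^ p = cot (th n k) ^ p"
    by (simp add: power_mult_distrib)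
qed

lemma bounds_odd:
  assumes n: "2 \<le> n" and p: "odd p"
  shows "(c1^p - c2^p) * real n ^ p \<le> \<bar>S n p\<bar> \<and> \<bar>S n p\<bar> \<le> (4/pi)^p * real n ^ p"
proof -
  define b where "b j = cot (th n (Suc j)) ^ p" for j
  have e: "S n p = - (\<Sum>j<n. (-1)^j * b j)"
    unfolding S_odd[OF p] sum_shift1 b_def by (simp add: sum_negf)
  have "b 0 - b 1 \<le> (\<Sum>j<n. (-1)^j * b j) \<and> (\<Sum>j<n. (-1)^j * b j) \<le> b 0"
  proof (rule alt_bound2)
    show "2 \<le> n" by (rule n)
    show "\<forall>j<n. 0 \<le> b j" unfolding b_def using a_pos by (auto intro: less_imp_le)
    show "\<forall>j. Suc j < n \<longrightarrow> b (Suc j) \<le> b j"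
    proof (intro allI impI)
      fix j assume j: "Suc j < n"
      have "cot (th n (Suc (Suc j))) \<le> cot (th n (Suc j))" using a_mono[of "Suc j" n] j by simp
      moreover have "0 \<le> cot (th n (Suc (Suc j)))" using a_pos[of "Suc (Suc j)" n] j by simp
      ultimately show "b (Suc j) \<le> b j" unfolding b_def by (rule power_mono)
    qed
  qed
  moreover have "0 \<le> b 0 - b 1"
  proof -
    have "b 1 \<le> b 0" unfolding b_def using n a_mono[of 1 n] a_pos[of 2 n]
      by (auto intro!: power_mono simp: numeral_2_eq_2)
    then show ?thesis by simp
  qed
  ultimately have ab: "b 0 - b 1 \<le> \<bar>S n p\<bar> \<and> \<bar>S n p\<bar> \<le> b 0" unfolding e by auto
  have nn: "0 \<le> real n" by simp
  have b0u: "b 0 \<le> (4/pi)^p * real n ^ p"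
  proof -
    have "cot (th n 1) \<le> 4 * real n / ((2 * real 1 - 1) * pi)" using a_upper[of 1 n] n by simp
    then have "cot (th n 1) \<le> (4/pi) * real n" by simp
    then have "cot (th n 1) ^ p \<le> ((4/pi) * real n) ^ p" using a_pos[of 1 n] n
      by (intro power_mono) auto
    also have "((4/pi) * real n) ^ p = (4/pi)^p * real n ^ p" by (rule power_mult_distrib)
    finally show ?thesis unfolding b_def by simp
  qed
  have b0l: "(c1 * real n) ^ p \<le> b 0"
  proof -
    have "0 \<le> c1 * real n" using c12 by simp
    then show ?thesis unfolding b_def using a1_lower[of n] n by (intro power_mono) auto
  qed
  have b1u: "b 1 \<le> (c2 * real n) ^ p"
  proof -
    have "0 \<le> cot (th n 2)" using a_pos[of 2 n] n by simp
    then show ?thesis unfolding b_def using a2_upper[OF n]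
      by (simp add: numeral_2_eq_2 power_mono)
  qed
  have "(c1^p - c2^p) * real n ^ p = (c1 * real n)^p - (c2 * real n)^p"
    by (simp add: power_mult_distrib algebra_simps)
  also have "\<dots> \<le> b 0 - b 1" using b0l b1u by simp
  finally show ?thesis using ab b0u by simp
qed

lemma inv_sq_bound:
  assumes "1 \<le> k" "2 \<le> p"
  shows "1 / (2 * real k - 1) ^ p \<le> 1 / real k ^ 2"
proof -
  have k: "real k \<ge> 1" using assms by simp
  have "real k ^ 2 \<le> (2 * real k - 1) ^ 2" using k by (intro power_mono) auto
  also have "\<dots> \<le> (2 * real k - 1) ^ p" using k assms by (intro power_increasing) auto
  finally have "real k ^ 2 \<le> (2 * real k - 1) ^ p" .
  then show ?thesis using k by (intro divide_left_mono) auto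
qed

lemma bounds_even:
  assumes n: "2 \<le> n" and p: "even p" "2 \<le> p"
  shows "c1^p * real n ^ p \<le> \<bar>S n p\<bar> \<and> \<bar>S n p\<bar> \<le> (2 * (4/pi)^p) * real n ^ p"
proof -
  have e: "S n p = (\<Sum>k=1..n. cot (th n k) ^ p)" by (rule S_even[OF p(1)])
  have nonneg: "0 \<le> cot (th n k) ^ p" if "k \<in> {1..n}" for k
    using a_pos[of k n] that by auto
  have Sn: "0 \<le> S n p" unfolding e using nonneg by (intro sum_nonneg) auto
  have "cot (th n 1) ^ p \<le> S n p" unfolding e
    using n nonneg by (intro member_le_sum) auto
  moreover have "c1^p * real n ^ p \<le> cot (th n 1) ^ p"
  proof -
    have "0 \<le> c1 * real n" using c12 by simp
    then have "(c1 * real n) ^ p \<le> cot (th n 1) ^ p" using a1_lower[of n] n by (intro power_mono) auto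
    then show ?thesis by (simp add: power_mult_distrib)
  qed
  moreover have "S n p \<le> (2 * (4/pi)^p) * real n ^ p"
  proof -
    have "S n p \<le> (\<Sum>k=1..n. ((4/pi) * real n) ^ p * (1 / real k ^ 2))" unfolding e
    proof (rule sum_mono)
      fix k assume k: "k \<in> {1..n}"
      have k1: "1 \<le> k" "k \<le> n" using k by auto
      have "cot (th n k) ^ p \<le> (4 * real n / ((2 * real k - 1) * pi)) ^ p"
        using a_upper[OF k1] a_pos[OF k1] by (intro power_mono) auto
      also have "\<dots> = ((4/pi) * real n) ^ p * (1 / (2 * real k - 1) ^ p)"
      proof -
        have "4 * real n / ((2 * real k - 1) * pi) = ((4/pi) * real n) * (1 / (2 * real k - 1))"
          by (simp add: field_simps)
        then show ?thesis by (simp only: power_mult_distrib power_one_over)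
      qed
      also have "\<dots> \<le> ((4/pi) * real n) ^ p * (1 / real k ^ 2)"
        using inv_sq_bound[OF k1(1) p(2)] by (intro mult_left_mono) auto
      finally show "cot (th n k) ^ p \<le> ((4/pi) * real n) ^ p * (1 / real k ^ 2)" .
    qed
    also have "\<dots> = ((4/pi) * real n) ^ p * (\<Sum>k=1..n. 1 / real k ^ 2)"
      by (simp add: sum_distrib_left)
    also have "\<dots> \<le> ((4/pi) * real n) ^ p * 2"
    proof (rule mult_left_mono)
      have "(\<Sum>k=1..n. 1 / real k ^ 2) \<le> 2 - 1 / real n" using sum_inv_sq[of n] n by simp
      also have "\<dots> \<le> 2" by simp
      finally show "(\<Sum>k=1..n. 1 / real k ^ 2) \<le> 2" .
      show "0 \<le> ((4/pi) * real n) ^ p" by simp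
    qed
    also have "\<dots> = (2 * (4/pi)^p) * real n ^ p" unfolding power_mult_distrib by (simp add: mult_ac)
    finally show ?thesis .
  qed
  ultimately show ?thesis using Sn by simp
qed

lemma of_rat_poly: "of_rat (poly p x) = poly (map_poly of_rat p) (of_rat x :: real)"
  by (induction p) (simp_all add: map_poly_pCons of_rat_add of_rat_mult)

lemma degree_map_of_rat: "degree (map_poly (of_rat :: rat \<Rightarrow> real) p) = degree p"
  by (rule degree_map_poly) simp



lemma degree_from_S:
  fixes T :: "rat poly"
  assumes val: "\<forall>n\<ge>1. of_rat (poly T (of_nat n)) = S n p"
    and c: "c > 0"
    and bnd: "\<And>n. 2 \<le> n \<Longrightarrow> c * real n ^ p \<le> \<bar>S n p\<bar> \<and> \<bar>S n p\<bar> \<le> C * real n ^ p"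
  shows "degree T = p"
proof -
  have pv: "poly (map_poly of_rat T) (real n) = S n p" if "n \<ge> 1" for n
    using val that of_rat_poly[of T "of_nat n"] by simp
  have "degree (map_poly (of_rat :: rat \<Rightarrow> real) T) = p"
  proof (rule degree_from_bounds[OF c])
    show "\<forall>n::nat\<ge>2. c * real n ^ p \<le> \<bar>poly (map_poly of_rat T) (real n)\<bar>"
      using bnd pv by simp
    show "\<forall>n::nat\<ge>2. \<bar>poly (map_poly of_rat T) (real n)\<bar> \<le> C * real n ^ p"
      using bnd pv by simp
  qed
  then show ?thesis by (simp add: degree_map_of_rat)
qed

theorem corollary3p3:
  fixes m :: nat
  assumes "m \<ge> 1"
  shows "\<exists>U V :: rat poly.
    degree U = 2*m - 1 \<and> degree V = 2*m \<and>
    int_valued_poly U \<and> int_valued_poly V \<and>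
    (\<forall>n::nat. n \<ge> 2 \<longrightarrow>
       (\<Sum>k=1..n. (-1)^k * cot ((2*real k - 1) * pi / (4*real n)) ^ (2*m - 1))
         = of_rat (poly U (of_nat n)) \<and>
       (\<Sum>k=1..n. cot ((2*real k - 1) * pi / (4*real n)) ^ (2*m))
         = of_rat (poly V (of_nat n)))"
proof -
  have m1: "1 \<le> 2*m - 1" and m2: "1 \<le> 2*m" using assms by auto
  have od: "odd (2*m - 1)" using assms by simp
  have ev: "even (2*m)" "2 \<le> 2*m" using assms by auto
  obtain U where U: "int_valued_poly U" "\<forall>n\<ge>1. of_rat (poly U (of_nat n)) = S n (2*m-1)"
    using main_exists[OF m1] by blast
  obtain V where V: "int_valued_poly V" "\<forall>n\<ge>1. of_rat (poly V (of_nat n)) = S n (2*m)"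
    using main_exists[OF m2] by blast
  have dU: "degree U = 2*m - 1"
  proof (rule degree_from_S[OF U(2)])
    show "0 < c1 ^ (2*m-1) - c2 ^ (2*m-1)"
      using c12 m1 power_strict_mono[of c2 c1 "2*m-1"] by simp
    show "(c1 ^ (2*m-1) - c2 ^ (2*m-1)) * real n ^ (2*m-1) \<le> \<bar>S n (2*m-1)\<bar> \<and> \<bar>S n (2*m-1)\<bar> \<le> (4/pi)^(2*m-1) * real n ^ (2*m-1)"
      if "2 \<le> n" for n
      using bounds_odd[OF that od] .
  qed
  have dV: "degree V = 2*m"
  proof (rule degree_from_S[OF V(2)])
    show "0 < c1 ^ (2*m)" using c12 by simp
    show "c1 ^ (2*m) * real n ^ (2*m) \<le> \<bar>S n (2*m)\<bar> \<and> \<bar>S n (2*m)\<bar> \<le> (2 * (4/pi)^(2*m)) * real n ^ (2*m)"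
      if "2 \<le> n" for n
      using bounds_even[OF that ev] .
  qed
  have sums: "(\<Sum>k=1..n. (-1)^k * cot ((2*real k - 1) * pi / (4*real n)) ^ (2*m - 1))
         = of_rat (poly U (of_nat n)) \<and>
       (\<Sum>k=1..n. cot ((2*real k - 1) * pi / (4*real n)) ^ (2*m))
         = of_rat (poly V (of_nat n))" if n: "n \<ge> 2" for n :: nat
  proof
    show "(\<Sum>k=1..n. (-1)^k * cot ((2*real k - 1) * pi / (4*real n)) ^ (2*m - 1))
         = of_rat (poly U (of_nat n))"
      using U(2) n unfolding S_odd[OF od] th_def by simp
    show "(\<Sum>k=1..n. cot ((2*real k - 1) * pi / (4*real n)) ^ (2*m))
         = of_rat (poly V (of_nat n))"
      using V(2) n unfolding S_even[OF ev(1)] th_def by simp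
  qed
  show ?thesis
    using dU dV U(1) V(1) sums by blast
qed

end
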